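(* Let $p\in\mathbb{N}$, $A>0$, and let $\alpha_1,\dots,\alpha_p,\beta_1,\dots,\beta_p$ be real numbers such that $0<\alpha_1\le\dots\le\alpha_p$, $0<\beta_1\le\dots\le\beta_p$, $\sum_{j=1}^k\beta_j-\sum_{j=1}^k\alpha_j\ge0$ for $k=1,\dots,p$, and $\sum_{j=1}^p(\beta_j-\alpha_j)>0$. Then the function $$z\mapsto{}_p\Psi_p\Big[_{(\beta_1,A),\dots,(\beta_p,A)}^{(\alpha_1,A),\dots,(\alpha_p,A)}\Big|-z\Big]$$ is completely monotonic on $(0,\infty)$.
   Context: The Fox-Wright function is ${}_p\Psi_p\Big[_{(\beta_1,A),\dots,(\beta_p,A)}^{(\alpha_1,A),\dots,(\alpha_p,A)}\Big|z\Big]=\sum_{k=0}^\infty\prod_{i=1}^p\frac{\Gamma(\alpha_i+kA)}{\Gamma(\beta_i+kA)}\frac{z^k}{k!}$. A function $f$ on an interval $I$ is completely monotonic if it is infinitely differentiable and $(-1)^nf^{(n)}\ge0$ on $I$ for all $n\in\mathbb{N}_0$. *)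

theory Defs
  imports "HOL-Analysis.Analysis"
begin

definition fox_wright :: "nat \<Rightarrow> (nat \<Rightarrow> real) \<Rightarrow> (nat \<Rightarrow> real) \<Rightarrow> real \<Rightarrow> real \<Rightarrow> real" where
  "fox_wright p \<alpha> \<beta> A z =
     (\<Sum>k. (\<Prod>i\<in>{1..p}. Gamma (\<alpha> i + real k * A) / Gamma (\<beta> i + real k * A)) * z ^ k / fact k)"

definition completely_monotonic_on :: "(real \<Rightarrow> real) \<Rightarrow> real set \<Rightarrow> bool" where
  "completely_monotonic_on f I \<longleftrightarrow>
     (\<forall>n. \<forall>x\<in>I. (deriv ^^ n) f differentiable (at x)) \<and>
     (\<forall>n. \<forall>x\<in>I. (-1) ^ n * (deriv ^^ n) f x \<ge> 0)"

end

theory Submission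
  imports Defs
begin


fun nd :: "nat \<Rightarrow> (nat \<Rightarrow> real) \<Rightarrow> nat \<Rightarrow> real" where
  "nd 0 c k = c k"
| "nd (Suc m) c k = nd m c k - nd m c (Suc k)"

definition CMseq :: "(nat \<Rightarrow> real) \<Rightarrow> bool" where
  "CMseq c \<longleftrightarrow> (\<forall>m k. 0 \<le> nd m c k)"

lemma nd_add: "nd m (\<lambda>k. f k + g k) k = nd m f k + nd m g k"
  by (induction m arbitrary: k) auto

lemma nd_diff: "nd m (\<lambda>k. f k - g k) k = nd m f k - nd m g k"
  by (induction m arbitrary: k) auto

lemma nd_scale: "nd m (\<lambda>k. a * f k) k = a * nd m f k"
  by (induction m arbitrary: k) (auto simp: algebra_simps)

lemma nd_shift: "nd m (\<lambda>j. c (j + n)) k = nd m c (k + n)"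
  by (induction m arbitrary: k) auto

lemma nd_Suc': "nd (Suc m) c k = nd m (\<lambda>j. c j - c (Suc j)) k"
proof (induction m arbitrary: k)
  case 0 then show ?case by simp
next
  case (Suc m)
  show ?case by (simp only: nd.simps Suc[symmetric])
qed

lemma nd_const: "nd m (\<lambda>k. a) k = (if m = 0 then a else 0)"
  by (induction m arbitrary: k) auto

lemma CMseq_shift: "CMseq c \<Longrightarrow> CMseq (\<lambda>j. c (j + n))"
  by (simp add: CMseq_def nd_shift)

lemma CMseq_nd1: "CMseq c \<Longrightarrow> CMseq (\<lambda>j. c j - c (Suc j))"
  unfolding CMseq_def by (metis nd_Suc')

lemma CMseq_add: "CMseq f \<Longrightarrow> CMseq g \<Longrightarrow> CMseq (\<lambda>k. f k + g k)"
  by (simp add: CMseq_def nd_add)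

lemma CMseq_scale: "CMseq f \<Longrightarrow> a \<ge> 0 \<Longrightarrow> CMseq (\<lambda>k. a * f k)"
  by (simp add: CMseq_def nd_scale)

lemma CMseq_const: "a \<ge> 0 \<Longrightarrow> CMseq (\<lambda>k. a)"
  by (simp add: CMseq_def nd_const)

lemma CMseq_mult_aux:
  "\<forall>f g. CMseq f \<longrightarrow> CMseq g \<longrightarrow> (\<forall>k. 0 \<le> nd m (\<lambda>j. f j * g j) k)"
proof (induction m)
  case 0 then show ?case by (auto simp: CMseq_def intro!: mult_nonneg_nonneg dest: spec[of _ 0])
next
  case (Suc m)
  show ?case
  proof (intro allI impI)
    fix f g k assume f: "CMseq f" and g: "CMseq g"
    have eq: "(\<lambda>j. f j * g j - f (Suc j) * g (Suc j)) =
       (\<lambda>j. (f j - f (Suc j)) * g j + f (j + 1) * (g j - g (Suc j)))"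
      by (auto simp: algebra_simps)
    have "nd (Suc m) (\<lambda>j. f j * g j) k =
        nd m (\<lambda>j. (f j - f (Suc j)) * g j) k + nd m (\<lambda>j. f (j + 1) * (g j - g (Suc j))) k"
      by (simp only: nd_Suc' eq nd_add)
    moreover have "0 \<le> nd m (\<lambda>j. (f j - f (Suc j)) * g j) k"
      using Suc CMseq_nd1[OF f] g by blast
    moreover have "0 \<le> nd m (\<lambda>j. f (j + 1) * (g j - g (Suc j))) k"
      using Suc CMseq_shift[OF f, of 1] CMseq_nd1[OF g] by blast
    ultimately show "0 \<le> nd (Suc m) (\<lambda>j. f j * g j) k" by simp
  qed
qed

lemma CMseq_mult: "CMseq f \<Longrightarrow> CMseq g \<Longrightarrow> CMseq (\<lambda>k. f k * g k)"
  using CMseq_mult_aux unfolding CMseq_def by blast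

lemma CMseq_prod: "finite S \<Longrightarrow> (\<And>i. i \<in> S \<Longrightarrow> CMseq (f i)) \<Longrightarrow> CMseq (\<lambda>k. \<Prod>i\<in>S. f i k)"
  by (induction S rule: finite_induct) (auto intro: CMseq_mult CMseq_const)

lemma nd_tendsto: "(\<And>k. (\<lambda>n. F n k) \<longlonglongrightarrow> c k) \<Longrightarrow> (\<lambda>n. nd m (F n) k) \<longlonglongrightarrow> nd m c k"
  by (induction m arbitrary: k) (auto intro: tendsto_diff)

lemma CMseq_limit:
  assumes "\<And>n. CMseq (F n)" "\<And>k. (\<lambda>n. F n k) \<longlonglongrightarrow> c k"
  shows "CMseq c"
  unfolding CMseq_def
proof (intro allI)
  fix m k
  show "0 \<le> nd m c k"
    using nd_tendsto[where F=F and c=c and m=m and k=k, OF assms(2)] assms(1)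
    by (intro tendsto_lowerbound[of "\<lambda>n. nd m (F n) k"]) (auto simp: CMseq_def)
qed

lemma CMseq_nonneg: "CMseq c \<Longrightarrow> 0 \<le> c k"
  unfolding CMseq_def by (metis nd.simps(1))

lemma CMseq_decr: "CMseq c \<Longrightarrow> c (Suc k) \<le> c k"
proof -
  assume "CMseq c"
  then have "0 \<le> nd 1 c k" unfolding CMseq_def by blast
  then show ?thesis by simp
qed

lemma CMseq_le0: "CMseq c \<Longrightarrow> c k \<le> c 0"
  by (induction k) (auto dest: CMseq_decr[of c] intro: order_trans)

lemma nd_closed: "nd m c k = (\<Sum>j\<le>m. (-1)^j * of_nat (m choose j) * c (k + j))"
proof (induction m arbitrary: k)
  case 0 then show ?case by simp
next
  case (Suc m)
  have "nd (Suc m) c k = (\<Sum>j\<le>m. (-1)^j * of_nat (m choose j) * c (k + j))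
      - (\<Sum>j\<le>m. (-1)^j * of_nat (m choose j) * c (Suc k + j))"
    by (simp add: Suc)
  also have "(\<Sum>j\<le>m. (-1)^j * of_nat (m choose j) * c (Suc k + j)) =
     (\<Sum>j\<le>Suc m. (if j = 0 then 0 else (-1)^(j-1) * of_nat (m choose (j-1)) * c (k + j)))"
    by (subst sum.atMost_Suc_shift) simp
  also have "(\<Sum>j\<le>m. (-1)^j * of_nat (m choose j) * c (k + j)) =
     (\<Sum>j\<le>Suc m. (-1)^j * of_nat (m choose j) * c (k + j))"
    by simp
  finally have "nd (Suc m) c k = (\<Sum>j\<le>Suc m. (-1)^j * of_nat (m choose j) * c (k + j)
       - (if j = 0 then 0 else (-1)^(j-1) * of_nat (m choose (j-1)) * c (k + j)))"
    by (simp add: sum_subtractf)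
  also have "\<dots> = (\<Sum>j\<le>Suc m. (-1)^j * of_nat (Suc m choose j) * c (k + j))"
  proof (rule sum.cong[OF refl])
    fix j assume "j \<in> {..Suc m}"
    show "(-1)^j * of_nat (m choose j) * c (k + j)
       - (if j = 0 then 0 else (-1)^(j-1) * of_nat (m choose (j-1)) * c (k + j))
       = (-1)^j * of_nat (Suc m choose j) * c (k + j)"
    proof (cases j)
      case 0 then show ?thesis by simp
    next
      case (Suc i)
      then show ?thesis by (simp add: algebra_simps)
    qed
  qed
  finally show ?case .
qed



definition CMfun :: "(real \<Rightarrow> real) \<Rightarrow> bool" where
  "CMfun f \<longleftrightarrow> (\<forall>x0\<ge>0. \<forall>h>0. CMseq (\<lambda>k. f (x0 + real k * h)))"

lemma CMfun_cong: "CMfun f \<Longrightarrow> (\<And>x. x \<ge> 0 \<Longrightarrow> f x = g x) \<Longrightarrow> CMfun g"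
  unfolding CMfun_def
proof (intro allI impI)
  fix x0 h :: real assume f: "\<forall>x0\<ge>0. \<forall>h>0. CMseq (\<lambda>k. f (x0 + real k * h))"
    and eq: "\<And>x. x \<ge> 0 \<Longrightarrow> f x = g x" and x0: "0 \<le> x0" and h: "0 < h"
  have "(\<lambda>k. f (x0 + real k * h)) = (\<lambda>k. g (x0 + real k * h))"
    using x0 h by (intro ext eq) simp
  with f x0 h show "CMseq (\<lambda>k. g (x0 + real k * h))" by metis
qed

lemma CMfun_mult: "CMfun f \<Longrightarrow> CMfun g \<Longrightarrow> CMfun (\<lambda>x. f x * g x)"
  unfolding CMfun_def by (auto intro: CMseq_mult)

lemma CMfun_add: "CMfun f \<Longrightarrow> CMfun g \<Longrightarrow> CMfun (\<lambda>x. f x + g x)"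
  unfolding CMfun_def by (auto intro: CMseq_add)

lemma CMfun_scale: "CMfun f \<Longrightarrow> a \<ge> 0 \<Longrightarrow> CMfun (\<lambda>x. a * f x)"
  unfolding CMfun_def by (auto intro: CMseq_scale)

lemma CMfun_const: "a \<ge> 0 \<Longrightarrow> CMfun (\<lambda>x. a)"
  unfolding CMfun_def by (auto intro: CMseq_const)

lemma nd_inv:
  assumes a: "a > 0" and h: "h > 0"
  shows "nd m (\<lambda>k. 1 / (a + real k * h)) k = fact m * h ^ m / (\<Prod>j\<le>m. (a + real (k + j) * h))"
proof (induction m arbitrary: k)
  case 0 then show ?case by simp
next
  case (Suc m)
  have pos: "\<And>i. a + real i * h > 0" using a h by (simp add: add_pos_nonneg)
  let ?P = "\<lambda>k. \<Prod>j\<le>m. (a + real (k + j) * h)"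
  have P1: "(\<Prod>j\<le>Suc m. (a + real (k + j) * h)) = ?P k * (a + real (k + Suc m) * h)"
    by simp
  have P2: "(\<Prod>j\<le>Suc m. (a + real (k + j) * h)) = (a + real k * h) * ?P (Suc k)"
    by (subst prod.atMost_Suc_shift) simp
  have Pp: "?P i > 0" for i by (intro prod_pos ballI) (rule pos)
  have "nd (Suc m) (\<lambda>k. 1 / (a + real k * h)) k = fact m * h ^ m / ?P k - fact m * h ^ m / ?P (Suc k)"
    by (simp add: Suc)
  also have "\<dots> = fact m * h ^ m * ((a + real (k + Suc m) * h) - (a + real k * h)) /
      (\<Prod>j\<le>Suc m. (a + real (k + j) * h))"
  proof -
    define X where "X = fact m * h ^ m"
    define D where "D = (\<Prod>j\<le>Suc m. (a + real (k + j) * h))"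
    have e1: "X / ?P k = X * (a + real (k + Suc m) * h) / D"
      unfolding D_def P1 using Pp[of k] pos[of "k + Suc m"] by simp
    have e2: "X / ?P (Suc k) = X * (a + real k * h) / D"
      unfolding D_def P2 using Pp[of "Suc k"] pos[of k] by simp
    show ?thesis unfolding X_def[symmetric] D_def[symmetric] e1 e2 by (simp add: diff_divide_distrib[symmetric] algebra_simps)
  qed
  also have "\<dots> = fact (Suc m) * h ^ Suc m / (\<Prod>j\<le>Suc m. (a + real (k + j) * h))"
    by (simp add: algebra_simps)
  finally show ?case .
qed

lemma CMfun_inv: "a > 0 \<Longrightarrow> CMfun (\<lambda>x. 1 / (x + a))"
  unfolding CMfun_def CMseq_def
proof (intro allI impI)
  fix x0 h :: real and m k assume a: "a > 0" and x0: "0 \<le> x0" and h: "0 < h"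
  have "(\<lambda>k. 1 / (x0 + real k * h + a)) = (\<lambda>k. 1 / ((x0 + a) + real k * h))"
    by (simp add: algebra_simps)
  moreover have "0 \<le> nd m (\<lambda>k. 1 / ((x0 + a) + real k * h)) k"
  proof -
    have pos: "\<And>i. 0 < x0 + a + real i * h" using a x0 h by (simp add: add_pos_nonneg)
    show ?thesis using a x0 h pos by (subst nd_inv) (auto intro!: divide_nonneg_pos prod_pos simp del: of_nat_add)
  qed
  ultimately show "0 \<le> nd m (\<lambda>k. 1 / (x0 + real k * h + a)) k" by simp
qed

lemma CMfun_ratio1:
  assumes "0 < a" "a \<le> b"
  shows "CMfun (\<lambda>x. (b + x) / (a + x))"
proof -
  have "CMfun (\<lambda>x. 1 + (b - a) * (1 / (x + a)))"
    using assms by (intro CMfun_add CMfun_const CMfun_scale CMfun_inv) auto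
  then show ?thesis
    by (rule CMfun_cong) (use assms in \<open>auto simp: field_simps\<close>)
qed

lemma CMfun_ratio2:
  assumes "0 < a1" "a1 \<le> b1" "b1 \<le> aj"
  shows "CMfun (\<lambda>x. ((b1 + x) * ((a1 + aj - b1) + x)) / ((a1 + x) * (aj + x)))"
proof -
  have "CMfun (\<lambda>x. 1 + ((b1 - a1) * (aj - b1)) * ((1 / (x + a1)) * (1 / (x + aj))))"
    using assms by (intro CMfun_add CMfun_const CMfun_scale CMfun_inv CMfun_mult) auto
  then show ?thesis
  proof (rule CMfun_cong)
    fix x :: real assume x: "0 \<le> x"
    have p1: "a1 + x > 0" "aj + x > 0" using assms x by auto
    have n: "((b1 + x) * ((a1 + aj - b1) + x)) = (a1+x)*(aj+x) + (b1-a1)*(aj-b1)" by algebra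
    show "1 + ((b1 - a1) * (aj - b1)) * ((1 / (x + a1)) * (1 / (x + aj))) =
      ((b1 + x) * ((a1 + aj - b1) + x)) / ((a1 + x) * (aj + x))"
      unfolding n using p1 by (simp add: add_divide_distrib add.commute)
  qed
qed



definition ratf :: "real list \<Rightarrow> real list \<Rightarrow> real \<Rightarrow> real" where
  "ratf a b x = prod_list (map (\<lambda>t. t + x) b) / prod_list (map (\<lambda>t. t + x) a)"

lemma prod_list_pos: fixes l :: "real list" shows "(\<forall>t\<in>set l. 0 < t) \<Longrightarrow> 0 \<le> x \<Longrightarrow> 0 < prod_list (map (\<lambda>t. t + x) l)"
  by (induction l) (simp_all add: add_pos_nonneg mult_pos_pos)

lemma sum_take_le:
  fixes xs ys :: "real list"
  shows "length xs = length ys \<Longrightarrow> (\<forall>i<length xs. xs!i \<le> ys!i) \<Longrightarrow> sum_list (take k xs) \<le> sum_list (take k ys)"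
proof (induction xs arbitrary: ys k)
  case Nil then show ?case by simp
next
  case (Cons x xs)
  then obtain y ys' where ys: "ys = y # ys'" by (cases ys) auto
  show ?case
  proof (cases k)
    case 0 then show ?thesis by simp
  next
    case (Suc k')
    have "x \<le> y" using Cons.prems ys by (metis length_greater_0_conv list.distinct(1) nth_Cons_0)
    moreover have "sum_list (take k' xs) \<le> sum_list (take k' ys')"
      using Cons.prems ys by (intro Cons.IH) auto
    ultimately show ?thesis using ys Suc by simp
  qed
qed

lemma core:
  "length a = length b \<Longrightarrow> sorted b \<Longrightarrow> (\<forall>t\<in>set a. 0 < t)
   \<Longrightarrow> (\<forall>k. sum_list (take k a) \<le> sum_list (take k b)) \<Longrightarrow> CMfun (ratf a b)"
proof (induction b arbitrary: a)
  case Nil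
  then have "a = []" by simp
  then have "ratf a [] = (\<lambda>x. 1)" by (auto simp: ratf_def)
  then show ?case by (simp add: CMfun_const)
next
  case (Cons b1 bs)
  from Cons.prems(1) obtain a1 rest where a: "a = a1 # rest" by (cases a) auto
  have a1b1: "a1 \<le> b1" using Cons.prems(4)[rule_format, of 1] a by simp
  have a1pos: "0 < a1" using Cons.prems(3) a by simp
  have restpos: "\<forall>t\<in>set rest. 0 < t" using Cons.prems(3) a by simp
  have bsge: "\<forall>t\<in>set bs. b1 \<le> t" using Cons.prems(2) by simp
  have sbs: "sorted bs" using Cons.prems(2) by simp
  have lr: "length rest = length bs" using Cons.prems(1) a by simp
  define xs where "xs = takeWhile (\<lambda>t. t < b1) rest"
  define ys where "ys = dropWhile (\<lambda>t. t < b1) rest"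
  have rxy: "rest = xs @ ys" unfolding xs_def ys_def by simp
  have xslt: "\<forall>t\<in>set xs. t < b1" unfolding xs_def by (meson set_takeWhileD)
  show ?case
  proof (cases ys)
    case Nil
    have IH: "CMfun (ratf rest bs)"
    proof (rule Cons.IH[OF lr sbs restpos], intro allI sum_take_le[OF lr] allI impI)
      fix i assume i: "i < length rest"
      have "rest ! i < b1" using xslt Nil rxy i by simp
      also have "b1 \<le> bs ! i" using bsge i lr by simp
      finally show "rest ! i \<le> bs ! i" by simp
    qed
    have "CMfun (\<lambda>x. (b1 + x) / (a1 + x) * ratf rest bs x)"
      by (intro CMfun_mult CMfun_ratio1 IH a1pos a1b1)
    then show ?thesis
      by (rule CMfun_cong) (auto simp: ratf_def a add.commute)
  next
    case (Cons aj zs)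
    have ajge: "b1 \<le> aj" using Cons unfolding ys_def
      by (metis hd_dropWhile list.discI list.sel(1) not_less)
    define e where "e = a1 + aj - b1"
    define a2 where "a2 = xs @ e # zs"
    have rest: "rest = xs @ aj # zs" using rxy Cons by simp
    have epos: "0 < e" using a1pos ajge e_def by simp
    have len2: "length a2 = length bs" using lr rest a2_def by simp
    have pos2: "\<forall>t\<in>set a2. 0 < t" using restpos rest epos a2_def by auto
    have IH: "CMfun (ratf a2 bs)"
    proof (rule Cons.IH[OF len2 sbs pos2], intro allI)
      fix k
      show "sum_list (take k a2) \<le> sum_list (take k bs)"
      proof (cases "k \<le> length xs")
        case True
        have lx: "length xs \<le> length bs" using lr rest by simp
        have "sum_list (take k xs) \<le> sum_list (take k (take (length xs) bs))"
        proof (rule sum_take_le)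
          show "length xs = length (take (length xs) bs)" using lx by simp
          show "\<forall>i<length xs. xs ! i \<le> take (length xs) bs ! i"
          proof (intro allI impI)
            fix i assume i: "i < length xs"
            have "xs ! i < b1" using xslt i by simp
            also have "b1 \<le> bs ! i" using bsge i lx by simp
            finally show "xs ! i \<le> take (length xs) bs ! i" using i by simp
          qed
        qed
        then show ?thesis using True a2_def by (simp add: min_def)
      next
        case False
        then obtain r where r: "k = length xs + Suc r" by (metis add_Suc_right less_imp_Suc_add not_le)
        have "sum_list (take (Suc k) a) \<le> sum_list (take (Suc k) (b1 # bs))"
          using Cons.prems(4) by blast
        then show ?thesis using r a rest a2_def e_def by simp
      qed
    qed
    have "CMfun (\<lambda>x. ((b1 + x) * ((a1 + aj - b1) + x)) / ((a1 + x) * (aj + x)) * ratf a2 bs x)"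
      by (intro CMfun_mult CMfun_ratio2 IH a1pos a1b1 ajge)
    then show ?thesis
    proof (rule CMfun_cong)
      fix x :: real assume x: "0 \<le> x"
      have p1: "0 < prod_list (map (\<lambda>t. t + x) xs)" using restpos rest x by (intro prod_list_pos) auto
      have p2: "0 < prod_list (map (\<lambda>t. t + x) zs)" using restpos rest x by (intro prod_list_pos) auto
      have p3: "0 < a1 + x" "0 < aj + x" "0 < e + x" using a1pos a1b1 ajge x epos by auto
      show "((b1 + x) * ((a1 + aj - b1) + x)) / ((a1 + x) * (aj + x)) * ratf a2 bs x = ratf a (b1 # bs) x"
      proof -
        define P where "P = prod_list (map (\<lambda>t. t + x) xs)"
        define Q where "Q = prod_list (map (\<lambda>t. t + x) zs)"
        define B where "B = prod_list (map (\<lambda>t. t + x) bs)"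
        have g: "\<And>P Q B a1 aj e b1 :: real. P > 0 \<Longrightarrow> Q > 0 \<Longrightarrow> a1 > 0 \<Longrightarrow> aj > 0 \<Longrightarrow> e > 0 \<Longrightarrow>
          b1 * e / (a1 * aj) * (B / (P * (e * Q))) = b1 * B / (a1 * (P * (aj * Q)))"
          by (simp add: field_simps)
        have "ratf a (b1 # bs) x = (b1 + x) * B / ((a1 + x) * (P * ((aj + x) * Q)))"
          unfolding ratf_def a rest P_def Q_def B_def by simp
        moreover have "ratf a2 bs x = B / (P * ((e + x) * Q))"
          unfolding ratf_def a2_def P_def Q_def B_def by simp
        ultimately show ?thesis unfolding e_def[symmetric]
          using g[of P Q "a1 + x" "aj + x" "e + x" "b1 + x" B] p1 p2 p3 P_def Q_def by simp
      qed
    qed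
  qed
qed



lemma set_upt1: "set [1..<Suc p] = {1..p}" by auto

lemma prod_list_idx: "prod_list (map f [1..<Suc p]) = prod f {1..p}"
  by (metis distinct_upt prod.distinct_set_conv_list set_upt1)

lemma sum_list_idx: "sum_list (map (f::nat\<Rightarrow>real) [1..<Suc p]) = sum f {1..p}"
  by (metis distinct_upt sum.distinct_set_conv_list set_upt1)

lemma ratf_idx: "ratf (map \<alpha> [1..<Suc p]) (map \<beta> [1..<Suc p]) x = (\<Prod>i\<in>{1..p}. (\<beta> i + x) / (\<alpha> i + x))"
proof -
  have "prod_list (map (\<lambda>t. t + x) (map \<beta> [1..<Suc p])) = (\<Prod>i\<in>{1..p}. \<beta> i + x)"
    using prod_list_idx[of "\<lambda>i. \<beta> i + x" p] by (simp add: o_def del: upt_Suc)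
  moreover have "prod_list (map (\<lambda>t. t + x) (map \<alpha> [1..<Suc p])) = (\<Prod>i\<in>{1..p}. \<alpha> i + x)"
    using prod_list_idx[of "\<lambda>i. \<alpha> i + x" p] by (simp add: o_def del: upt_Suc)
  ultimately show ?thesis by (simp add: ratf_def prod_dividef)
qed

lemma sum_take_idx: fixes \<alpha> :: "nat \<Rightarrow> real" shows "sum_list (take k (map \<alpha> [1..<Suc p])) = (\<Sum>j=1..min k p. \<alpha> j)"
proof -
  have "take k [1..<Suc p] = [1..<Suc (min k p)]"
  proof (cases "k \<le> p")
    case True then show ?thesis by (simp del: upt_Suc add: take_upt min_def)
  next
    case False then show ?thesis by (simp del: upt_Suc add: min_def)
  qed
  then have "take k (map \<alpha> [1..<Suc p]) = map \<alpha> [1..<Suc (min k p)]"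
    by (simp del: upt_Suc add: take_map)
  then show ?thesis
    using sum_list_idx[of \<alpha> "min k p"] by (simp del: upt_Suc)
qed

lemma ratf_CM:
  fixes p :: nat and \<alpha> \<beta> :: "nat \<Rightarrow> real"
  assumes "\<forall>i\<in>{1..p}. \<alpha> i > 0"
    and "\<forall>i j. 1 \<le> i \<longrightarrow> i \<le> j \<longrightarrow> j \<le> p \<longrightarrow> \<beta> i \<le> \<beta> j"
    and "\<forall>k\<in>{1..p}. (\<Sum>j=1..k. \<beta> j) - (\<Sum>j=1..k. \<alpha> j) \<ge> 0"
  shows "CMfun (ratf (map \<alpha> [1..<Suc p]) (map \<beta> [1..<Suc p]))"
proof (rule core)
  show "length (map \<alpha> [1..<Suc p]) = length (map \<beta> [1..<Suc p])" by simp
  show "sorted (map \<beta> [1..<Suc p])"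
    unfolding sorted_iff_nth_mono using assms(2) by (auto simp del: upt_Suc simp add: nth_upt)
  show "\<forall>t\<in>set (map \<alpha> [1..<Suc p]). 0 < t" using assms(1) by auto
  show "\<forall>k. sum_list (take k (map \<alpha> [1..<Suc p])) \<le> sum_list (take k (map \<beta> [1..<Suc p]))"
  proof
    fix k
    show "sum_list (take k (map \<alpha> [1..<Suc p])) \<le> sum_list (take k (map \<beta> [1..<Suc p]))"
    proof (cases "min k p = 0")
      case True then show ?thesis unfolding sum_take_idx by simp
    next
      case False
      then have "min k p \<in> {1..p}" by auto
      then show ?thesis unfolding sum_take_idx using assms(3) by force
    qed
  qed
qed

definition phi :: "nat \<Rightarrow> (nat \<Rightarrow> real) \<Rightarrow> (nat \<Rightarrow> real) \<Rightarrow> real \<Rightarrow> nat \<Rightarrow> real" where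
  "phi p \<alpha> \<beta> A k = (\<Prod>i\<in>{1..p}. Gamma (\<alpha> i + real k * A) / Gamma (\<beta> i + real k * A))"

lemma Gamma_series_ratio:
  fixes a b :: real
  assumes "a > 0" "b > 0"
  shows "Gamma_series a N / Gamma_series b N =
     exp ((a - b) * ln (real N)) * (\<Prod>j<Suc N. (b + real j) / (a + real j))"
proof -
  have pa: "pochhammer a (Suc N) > 0" "pochhammer b (Suc N) > 0"
    using assms by (auto intro: pochhammer_pos)
  have "Gamma_series a N / Gamma_series b N = exp (a * ln (real N)) / exp (b * ln (real N))
        * (pochhammer b (Suc N) / pochhammer a (Suc N))"
    unfolding Gamma_series_def using pa by (simp add: field_simps)
  also have "exp (a * ln (real N)) / exp (b * ln (real N)) = exp ((a - b) * ln (real N))"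
    by (simp add: exp_diff[symmetric] algebra_simps)
  also have "pochhammer b (Suc N) / pochhammer a (Suc N) = (\<Prod>j<Suc N. (b + real j) / (a + real j))"
    by (simp add: pochhammer_prod prod_dividef atLeast0LessThan)
  finally show ?thesis .
qed

lemma Gamma_series_ratio':
  fixes a b c :: real
  assumes "a + c > 0" "b + c > 0"
  shows "Gamma_series (a + c) N / Gamma_series (b + c) N =
     exp ((a - b) * ln (real N)) * (\<Prod>j<Suc N. (b + (real j + c)) / (a + (real j + c)))"
  using Gamma_series_ratio[OF assms, of N] by (simp add: algebra_simps del: prod.lessThan_Suc)

lemma phi_CM:
  fixes p :: nat and A :: real and \<alpha> \<beta> :: "nat \<Rightarrow> real"
  assumes A: "A > 0"
    and apos: "\<forall>i\<in>{1..p}. \<alpha> i > 0" and bpos: "\<forall>i\<in>{1..p}. \<beta> i > 0"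
    and "\<forall>i j. 1 \<le> i \<longrightarrow> i \<le> j \<longrightarrow> j \<le> p \<longrightarrow> \<beta> i \<le> \<beta> j"
    and "\<forall>k\<in>{1..p}. (\<Sum>j=1..k. \<beta> j) - (\<Sum>j=1..k. \<alpha> j) \<ge> 0"
  shows "CMseq (phi p \<alpha> \<beta> A)"
proof -
  let ?R = "ratf (map \<alpha> [1..<Suc p]) (map \<beta> [1..<Suc p])"
  have R: "CMfun ?R" using ratf_CM assms by blast
  define F where "F N k = (\<Prod>i\<in>{1..p}. Gamma_series (\<alpha> i + real k * A) N / Gamma_series (\<beta> i + real k * A) N)"
    for N k
  show ?thesis
  proof (rule CMseq_limit[of F])
    fix N
    have eq: "F N k = (\<Prod>i\<in>{1..p}. exp ((\<alpha> i - \<beta> i) * ln (real N))) *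
        (\<Prod>j<Suc N. ?R (real j + real k * A))" for k
    proof -
      have "F N k = (\<Prod>i\<in>{1..p}. exp ((\<alpha> i - \<beta> i) * ln (real N)) *
         (\<Prod>j<Suc N. (\<beta> i + (real j + real k * A)) / (\<alpha> i + (real j + real k * A))))"
        unfolding F_def using apos bpos A
        by (intro prod.cong refl Gamma_series_ratio') (auto intro!: add_pos_nonneg)
      also have "\<dots> = (\<Prod>i\<in>{1..p}. exp ((\<alpha> i - \<beta> i) * ln (real N))) *
         (\<Prod>i\<in>{1..p}. \<Prod>j<Suc N. (\<beta> i + (real j + real k * A)) / (\<alpha> i + (real j + real k * A)))"
        by (rule prod.distrib)
      also have "(\<Prod>i\<in>{1..p}. \<Prod>j<Suc N. (\<beta> i + (real j + real k * A)) / (\<alpha> i + (real j + real k * A)))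
         = (\<Prod>j<Suc N. ?R (real j + real k * A))"
        unfolding ratf_idx by (rule prod.swap)
      finally show ?thesis .
    qed
    have "CMseq (\<lambda>k. (\<Prod>i\<in>{1..p}. exp ((\<alpha> i - \<beta> i) * ln (real N))) *
        (\<Prod>j<Suc N. ?R (real j + real k * A)))"
    proof (intro CMseq_scale CMseq_prod)
      fix j assume "j \<in> {..<Suc N}"
      show "CMseq (\<lambda>k. ?R (real j + real k * A))" using R A unfolding CMfun_def by simp
    qed (auto intro: prod_nonneg)
    then show "CMseq (F N)" unfolding eq[abs_def] .
  next
    fix k
    show "(\<lambda>N. F N k) \<longlonglongrightarrow> phi p \<alpha> \<beta> A k"
      unfolding F_def phi_def
    proof (intro tendsto_prod tendsto_divide Gamma_series_LIMSEQ)
      fix i assume "i \<in> {1..p}"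
      then have "\<beta> i + real k * A > 0" using bpos A by (auto intro: add_pos_nonneg)
      then have "Gamma (\<beta> i + real k * A) > 0" by (rule Gamma_real_pos)
      then show "Gamma (\<beta> i + real k * A) \<noteq> 0" by linarith
    qed
  qed
qed



definition E :: "(nat \<Rightarrow> real) \<Rightarrow> real \<Rightarrow> real" where
  "E c z = (\<Sum>k. c k * (- z) ^ k / fact k)"

definition bnd :: "(nat \<Rightarrow> real) \<Rightarrow> bool" where
  "bnd c \<longleftrightarrow> (\<exists>B. \<forall>k. \<bar>c k\<bar> \<le> B)"

lemma summable_expabs: "summable (\<lambda>k. \<bar>y\<bar> ^ k / fact k :: real)"
  using summable_exp_generic[of "\<bar>y\<bar>"] by (simp add: divide_inverse mult.commute)

lemma bnd_summable:
  assumes "bnd c"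
  shows "summable (\<lambda>k. norm (c k * y ^ k / fact k))"
proof -
  obtain B where B: "\<forall>k. \<bar>c k\<bar> \<le> B" using assms bnd_def by auto
  show ?thesis
  proof (rule summable_comparison_test[where g = "\<lambda>k. B * (\<bar>y\<bar> ^ k / fact k)"])
    show "\<exists>N. \<forall>n\<ge>N. norm (norm (c n * y ^ n / fact n)) \<le> B * (\<bar>y\<bar> ^ n / fact n)"
      using B by (auto simp: abs_mult power_abs intro!: mult_right_mono divide_right_mono)
    show "summable (\<lambda>k. B * (\<bar>y\<bar> ^ k / fact k))"
      by (intro summable_mult summable_expabs)
  qed
qed

lemma E_pos:
  assumes c: "CMseq c" and z: "0 \<le> z"
  shows "0 \<le> E c z"
proof -
  have bc: "bnd c" unfolding bnd_def
    using CMseq_nonneg[OF c] CMseq_le0[OF c] by (intro exI[of _ "c 0"]) auto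
  let ?a = "\<lambda>k. c k * (- z) ^ k / fact k"
  let ?b = "\<lambda>k. z ^ k / fact k"
  have sa: "summable (\<lambda>k. norm (?a k))" using bnd_summable[OF bc] .
  have sb: "summable (\<lambda>k. norm (?b k))"
    using bnd_summable[of "\<lambda>k. 1" z] by (auto simp: bnd_def)
  have "(\<lambda>m. \<Sum>i\<le>m. ?a i * ?b (m - i)) sums ((\<Sum>k. ?a k) * (\<Sum>k. ?b k))"
    by (rule Cauchy_product_sums[OF sa sb])
  moreover have eb: "(\<Sum>k. ?b k) = exp z"
    using exp_converges[of z] by (simp add: sums_unique[symmetric] divide_inverse mult.commute)
  moreover have "\<And>m. 0 \<le> (\<Sum>i\<le>m. ?a i * ?b (m - i))"
  proof -
    fix m
    have "(\<Sum>i\<le>m. ?a i * ?b (m - i)) = z ^ m / fact m * nd m c 0"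
      unfolding nd_closed sum_distrib_left
    proof (rule sum.cong[OF refl])
      fix i assume i: "i \<in> {..m}"
      then have im: "i \<le> m" by simp
      have zz: "z ^ i * z ^ (m - i) = z ^ m" using im by (simp add: power_add[symmetric])
      have "of_nat (m choose i) = (fact m / (fact i * fact (m - i)) :: real)"
        using binomial_fact[OF im] by simp
      then show "c i * (- z) ^ i / fact i * (z ^ (m - i) / fact (m - i)) =
        z ^ m / fact m * ((- 1) ^ i * of_nat (m choose i) * c (0 + i))"
        by (simp add: power_minus[of z] zz[symmetric] field_simps)
    qed
    also have "0 \<le> \<dots>" using c z unfolding CMseq_def by simp
    finally show "0 \<le> (\<Sum>i\<le>m. ?a i * ?b (m - i))" .
  qed
  ultimately have S: "(\<lambda>m. \<Sum>i\<le>m. ?a i * ?b (m - i)) sums (E c z * exp z)"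
    and nn: "\<And>m. 0 \<le> (\<Sum>i\<le>m. ?a i * ?b (m - i))" unfolding E_def by simp_all
  have "0 \<le> E c z * exp z"
    using suminf_nonneg[OF sums_summable[OF S] nn] sums_unique[OF S] by simp
  then show ?thesis by (simp add: zero_le_mult_iff)
qed



lemma E_coef: "E c z = (\<Sum>k. (c k * (-1) ^ k / fact k) * z ^ k)"
  unfolding E_def by (simp add: power_minus[of z] mult_ac)

lemma E_deriv:
  assumes "bnd c"
  shows "(E c has_real_derivative E (\<lambda>k. - c (Suc k)) z) (at z)"
proof -
  let ?co = "\<lambda>k. c k * (-1) ^ k / fact k"
  have sm: "summable (\<lambda>n. ?co n * y ^ n)" for y
  proof -
    have "summable (\<lambda>k. c k * (- y) ^ k / fact k)"
      using summable_norm_cancel[OF bnd_summable[OF assms, of "- y"]] .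
    then show ?thesis by (simp add: power_minus[of y] mult_ac)
  qed
  have "((\<lambda>x. \<Sum>n. ?co n * x ^ n) has_field_derivative (\<Sum>n. diffs ?co n * z ^ n)) (at z)"
    by (rule termdiffs_strong_converges_everywhere) (rule sm)
  moreover have "(\<lambda>x. \<Sum>n. ?co n * x ^ n) = E c" by (intro ext) (simp add: E_coef)
  moreover have "(\<Sum>n. diffs ?co n * z ^ n) = E (\<lambda>k. - c (Suc k)) z"
    unfolding E_coef diffs_def
  proof (intro arg_cong[where f = suminf] ext)
    fix n
    show "of_nat (Suc n) * (c (Suc n) * (- 1) ^ Suc n / fact (Suc n)) * z ^ n =
       - c (Suc n) * (- 1) ^ n / fact n * z ^ n"
      by (simp add: divide_simps del: of_nat_Suc)
  qed
  ultimately show ?thesis by simp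
qed

lemma deriv_E: "bnd c \<Longrightarrow> deriv (E c) = E (\<lambda>k. - c (Suc k))"
  by (intro ext DERIV_imp_deriv E_deriv)

lemma bnd_shift: "bnd c \<Longrightarrow> bnd (\<lambda>k. (-1) ^ n * c (k + n))"
  unfolding bnd_def by (auto simp: abs_mult)

lemma funpow_deriv_E: "bnd c \<Longrightarrow> (deriv ^^ n) (E c) = E (\<lambda>k. (-1) ^ n * c (k + n))"
proof (induction n)
  case 0 then show ?case by simp
next
  case (Suc n)
  have "(deriv ^^ Suc n) (E c) = deriv (E (\<lambda>k. (-1) ^ n * c (k + n)))"
    using Suc by simp
  also have "\<dots> = E (\<lambda>k. - ((-1) ^ n * c (Suc k + n)))"
    by (rule deriv_E[OF bnd_shift[OF Suc.prems]])
  also have "(\<lambda>k. - ((-1) ^ n * c (Suc k + n))) = (\<lambda>k. (-1) ^ Suc n * c (k + Suc n))"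
    by auto
  finally show ?case .
qed

lemma E_scale: "bnd c \<Longrightarrow> E (\<lambda>k. a * c k) z = a * E c z"
  unfolding E_def
  using suminf_mult[OF summable_norm_cancel[OF bnd_summable[of c "- z"]], of a]
  by (simp add: mult_ac)

theorem theorem2:
  fixes p :: nat and A :: real and \<alpha> \<beta> :: "nat \<Rightarrow> real"
  assumes "A > 0"
    and "\<forall>i\<in>{1..p}. \<alpha> i > 0" and "\<forall>i\<in>{1..p}. \<beta> i > 0"
    and "\<forall>i j. 1 \<le> i \<longrightarrow> i \<le> j \<longrightarrow> j \<le> p \<longrightarrow> \<alpha> i \<le> \<alpha> j"
    and "\<forall>i j. 1 \<le> i \<longrightarrow> i \<le> j \<longrightarrow> j \<le> p \<longrightarrow> \<beta> i \<le> \<beta> j"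
    and "\<forall>k\<in>{1..p}. (\<Sum>j=1..k. \<beta> j) - (\<Sum>j=1..k. \<alpha> j) \<ge> 0"
    and "(\<Sum>j=1..p. \<beta> j - \<alpha> j) > 0"
  shows "completely_monotonic_on (\<lambda>z. fox_wright p \<alpha> \<beta> A (- z)) {0<..}"
proof -
  let ?c = "phi p \<alpha> \<beta> A"
  have cm: "CMseq ?c" using phi_CM[of A p \<alpha> \<beta>] assms by blast
  have bc: "bnd ?c" unfolding bnd_def
    using CMseq_nonneg[OF cm] CMseq_le0[OF cm] by (intro exI[of _ "?c 0"]) auto
  have f: "(\<lambda>z. fox_wright p \<alpha> \<beta> A (- z)) = E ?c"
    by (intro ext) (simp add: fox_wright_def E_def phi_def)
  have D: "(deriv ^^ n) (E ?c) = E (\<lambda>k. (-1) ^ n * ?c (k + n))" for n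
    by (rule funpow_deriv_E[OF bc])
  show ?thesis
    unfolding completely_monotonic_on_def f D
  proof (intro conjI allI ballI)
    fix n x
    show "E (\<lambda>k. (-1) ^ n * ?c (k + n)) differentiable (at x)"
      using E_deriv[OF bnd_shift[OF bc, of n]] real_differentiable_def by blast
    assume x: "x \<in> {0<..}"
    have bs: "bnd (\<lambda>k. ?c (k + n))" using bc unfolding bnd_def by blast
    have "(-1) ^ n * E (\<lambda>k. (-1) ^ n * ?c (k + n)) x = E (\<lambda>k. ?c (k + n)) x"
      using E_scale[OF bs, of "(-1) ^ n" x] by (simp flip: power_mult_distrib)
    also have "0 \<le> \<dots>" using E_pos[OF CMseq_shift[OF cm]] x by simp
    finally show "0 \<le> (-1) ^ n * E (\<lambda>k. (-1) ^ n * ?c (k + n)) x" .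
  qed
qed

end
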